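(* Let $f:\mathbb{R}^m\times\mathbb{R}^n\to\mathbb{R}$ satisfy the standing assumption described in the context, and let $\kappa=L_1/\mu$. Define $G(x,y)=\big[\nabla_{11} f - \nabla_{12} f (\nabla_{22} f)^{-1} \nabla_{21} f\big](x,y)$. Then: (1) $G$ is Lipschitz continuous on $\mathbb{R}^{m+n}$ (with respect to the Euclidean norm on $(x,y)$ and the spectral norm on matrices) with constant $L_G=L_2(1+\kappa)^2$; (2) the envelope function $\Phi(x)=\max_{y\in\mathbb{R}^n} f(x,y)$ is twice differentiable with $\nabla^2\Phi(x)=G(x,y^*(x))$ for all $x\in\mathbb{R}^m$, where $y^*(x)=\arg\max_{y} f(x,y)$, and $\nabla^2\Phi$ is Lipschitz continuous with constant $L_\Phi=L_G(1+\kappa)=L_2(1+\kappa)^3$.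
   Context: Standing assumption: $f:\mathbb{R}^m\times\mathbb{R}^n\to\mathbb{R}$ is twice continuously differentiable and (i) $\nabla f$ is $L_1$-Lipschitz on $\mathbb{R}^{m+n}$, and for every fixed $x$ the map $y\mapsto f(x,y)$ is $\mu$-strongly concave ($\mu>0$); (ii) the Jacobian blocks $\nabla_{11} f,\nabla_{12} f,\nabla_{21} f,\nabla_{22} f$, viewed as functions of $(x,y)$, are $L_2$-Lipschitz (Euclidean norm on $(x,y)$, spectral norm on matrices); (iii) $\Phi(x):=\max_{y\in\mathbb{R}^n}f(x,y)$ is bounded below and has compact sub-level sets. Notation: $\nabla_1 f,\nabla_2 f$ are the partial gradients in $x$ and $y$; $\nabla_{11}f$, $\nabla_{22}f$ are the partial Hessians in $x$ and $y$; $\nabla_{12}f\in\mathbb{R}^{m\times n}$ is the Jacobian of $\nabla_1 f$ with respect to $y$ and $\nabla_{21}f\in\mathbb{R}^{n\times m}$ is the Jacobian of $\nabla_2 f$ with respect to $x$. By strong concavity, $y^*(x)=\arg\max_y f(x,y)$ is unique, and $\nabla_{22}f$ is invertible. *)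

theory Defs
  imports "HOL-Analysis.Analysis"
begin

definition spec_norm :: "real^'n^'m \<Rightarrow> real" where
  "spec_norm A = onorm (\<lambda>v. A *v v)"

definition strongly_concave_on :: "real \<Rightarrow> 'a::real_normed_vector set \<Rightarrow> ('a \<Rightarrow> real) \<Rightarrow> bool" where
  "strongly_concave_on mu S g \<longleftrightarrow> convex S \<and>
     (\<forall>u\<in>S. \<forall>v\<in>S. \<forall>t::real. 0 \<le> t \<and> t \<le> 1 \<longrightarrow>
        g (t *\<^sub>R u + (1 - t) *\<^sub>R v) \<ge> t * g u + (1 - t) * g v + mu / 2 * t * (1 - t) * (norm (u - v))\<^sup>2)"

definition envelope :: "('a \<Rightarrow> 'b \<Rightarrow> real) \<Rightarrow> 'a \<Rightarrow> real" where
  "envelope f x = (SUP y. f x y)"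

definition argmax_y :: "('a \<Rightarrow> 'b \<Rightarrow> real) \<Rightarrow> 'a \<Rightarrow> 'b" where
  "argmax_y f x = (THE y. \<forall>y'. f x y' \<le> f x y)"

end

theory Submission
  imports Defs
begin


lemma bl_mv: "bounded_linear (\<lambda>v. (A::real^'n^'m) *v v)"
  by (simp add: linear_conv_bounded_linear)

lemma spec_norm_nonneg: "0 \<le> spec_norm A"
  unfolding spec_norm_def by (rule onorm_pos_le[OF bl_mv])

lemma spec_norm_mv: "norm (A *v v) \<le> spec_norm A * norm v"
  unfolding spec_norm_def by (rule onorm[OF bl_mv])

lemma spec_norm_le: "(\<And>v. norm ((A::real^'n^'m) *v v) \<le> c * norm v) \<Longrightarrow> spec_norm A \<le> c"
  unfolding spec_norm_def by (rule onorm_le)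

lemma spec_norm_add: "spec_norm ((A::real^'n^'m) + B) \<le> spec_norm A + spec_norm B"
proof (rule spec_norm_le)
  fix v
  have "norm ((A + B) *v v) \<le> norm (A *v v) + norm (B *v v)"
    by (simp add: matrix_vector_mult_add_rdistrib norm_triangle_ineq)
  also have "\<dots> \<le> spec_norm A * norm v + spec_norm B * norm v"
    by (intro add_mono spec_norm_mv)
  finally show "norm ((A + B) *v v) \<le> (spec_norm A + spec_norm B) * norm v"
    by (simp add: algebra_simps)
qed

lemma spec_norm_diff: "spec_norm ((A::real^'n^'m) - B) \<le> spec_norm A + spec_norm B"
proof (rule spec_norm_le)
  fix v
  have "norm ((A - B) *v v) \<le> norm (A *v v) + norm (B *v v)"
    by (simp add: matrix_vector_mult_diff_rdistrib norm_triangle_ineq4)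
  also have "\<dots> \<le> spec_norm A * norm v + spec_norm B * norm v"
    by (intro add_mono spec_norm_mv)
  finally show "norm ((A - B) *v v) \<le> (spec_norm A + spec_norm B) * norm v"
    by (simp add: algebra_simps)
qed

lemma spec_norm_mul: "spec_norm ((A::real^'n^'m) ** (B::real^'k^'n)) \<le> spec_norm A * spec_norm B"
proof (rule spec_norm_le)
  fix v
  have "norm ((A ** B) *v v) = norm (A *v (B *v v))"
    by (simp add: matrix_vector_mul_assoc)
  also have "\<dots> \<le> spec_norm A * norm (B *v v)" by (rule spec_norm_mv)
  also have "\<dots> \<le> spec_norm A * (spec_norm B * norm v)"
    by (intro mult_left_mono spec_norm_mv spec_norm_nonneg)
  finally show "norm ((A ** B) *v v) \<le> (spec_norm A * spec_norm B) * norm v"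
    by (simp add: algebra_simps)
qed

lemma deriv_quot_le:
  fixes \<psi> :: "real \<Rightarrow> real"
  assumes d: "(\<psi> has_real_derivative D) (at 0)"
    and le: "\<And>t. 0 < t \<Longrightarrow> t < 1 \<Longrightarrow> \<psi> t - \<psi> 0 \<le> t * c t"
    and c: "(c \<longlongrightarrow> c0) (at_right 0)"
  shows "D \<le> c0"
proof -
  have "((\<lambda>y. (\<psi> y - \<psi> 0) / (y - 0)) \<longlongrightarrow> D) (at 0)"
    using d by (simp add: has_field_derivative_iff)
  then have q: "((\<lambda>y. (\<psi> y - \<psi> 0) / y) \<longlongrightarrow> D) (at_right 0)"
    by (simp add: filterlim_at_split)
  have ev: "eventually (\<lambda>t. (\<psi> t - \<psi> 0) / t \<le> c t) (at_right 0)"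
    unfolding eventually_at_right_field
  proof (intro exI[of _ 1] conjI allI impI)
    fix t :: real assume "0 < t" "t < 1"
    then show "(\<psi> t - \<psi> 0) / t \<le> c t" using le[of t] by (simp add: divide_le_eq mult.commute)
  qed simp
  show ?thesis by (rule tendsto_le[OF _ c q ev]) simp
qed



lemma line_deriv:
  fixes h :: "'a::real_normed_vector \<Rightarrow> real"
  assumes d: "(h has_derivative h') (at u)"
  shows "((\<lambda>t. h (u + t *\<^sub>R w)) has_real_derivative h' w) (at 0)"
proof -
  have l: "((\<lambda>t::real. u + t *\<^sub>R w) has_derivative (\<lambda>t. t *\<^sub>R w)) (at 0)"
    by (auto intro!: derivative_eq_intros)
  have d': "(h has_derivative h') (at (u + 0 *\<^sub>R w))" using d by simp
  have "((\<lambda>t. h (u + t *\<^sub>R w)) has_derivative (\<lambda>t. h' (t *\<^sub>R w))) (at 0)"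
    by (rule has_derivative_compose[OF l d'])
  moreover have "(\<lambda>t. h' (t *\<^sub>R w)) = (*) (h' w)"
    using linear_cmul[OF has_derivative_linear[OF d]] by (auto simp: mult.commute)
  ultimately show ?thesis by (simp add: has_field_derivative_def)
qed

locale setting =
  fixes f :: "real^'m \<Rightarrow> real^'n \<Rightarrow> real"
    and g1 :: "real^'m \<Rightarrow> real^'n \<Rightarrow> real^'m"
    and g2 :: "real^'m \<Rightarrow> real^'n \<Rightarrow> real^'n"
    and H11 :: "real^'m \<Rightarrow> real^'n \<Rightarrow> real^'m^'m"
    and H12 :: "real^'m \<Rightarrow> real^'n \<Rightarrow> real^'n^'m"
    and H21 :: "real^'m \<Rightarrow> real^'n \<Rightarrow> real^'m^'n"
    and H22 :: "real^'m \<Rightarrow> real^'n \<Rightarrow> real^'n^'n"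
    and L1 L2 \<mu> :: real
  assumes grad_f: "\<And>x y. ((\<lambda>(u, v). f u v) has_derivative
                     (\<lambda>(h, k). g1 x y \<bullet> h + g2 x y \<bullet> k)) (at (x, y))"
    and hess_1: "\<And>x y. ((\<lambda>(u, v). g1 u v) has_derivative
                     (\<lambda>(h, k). H11 x y *v h + H12 x y *v k)) (at (x, y))"
    and hess_2: "\<And>x y. ((\<lambda>(u, v). g2 u v) has_derivative
                     (\<lambda>(h, k). H21 x y *v h + H22 x y *v k)) (at (x, y))"
    and lip_grad: "L1-lipschitz_on UNIV (\<lambda>(x, y). (g1 x y, g2 x y))"
    and mu_pos: "\<mu> > 0"
    and strong_conc: "\<And>x. strongly_concave_on \<mu> UNIV (\<lambda>y. f x y)"
    and lip_11: "\<And>x y x' y'. spec_norm (H11 x y - H11 x' y') \<le> L2 * norm ((x, y) - (x', y'))"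
    and lip_12: "\<And>x y x' y'. spec_norm (H12 x y - H12 x' y') \<le> L2 * norm ((x, y) - (x', y'))"
    and lip_21: "\<And>x y x' y'. spec_norm (H21 x y - H21 x' y') \<le> L2 * norm ((x, y) - (x', y'))"
    and lip_22: "\<And>x y x' y'. spec_norm (H22 x y - H22 x' y') \<le> L2 * norm ((x, y) - (x', y'))"
begin

lemma L1_nonneg: "0 \<le> L1"
  using lip_grad lipschitz_on_nonneg by blast

lemma fy_deriv: "((\<lambda>y. f x y) has_derivative (\<lambda>k. g2 x y \<bullet> k)) (at y)"
proof -
  have p: "((\<lambda>k. (x, k)) has_derivative (\<lambda>k. (0, k))) (at y)"
    by (auto intro!: derivative_eq_intros)
  have "((\<lambda>k. (\<lambda>(u, v). f u v) (x, k)) has_derivative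
          (\<lambda>k. (\<lambda>(h, k). g1 x y \<bullet> h + g2 x y \<bullet> k) (0, k))) (at y)"
    by (rule has_derivative_compose[OF p grad_f])
  then show ?thesis by simp
qed

lemma g2y_deriv: "((\<lambda>y. g2 x y) has_derivative (\<lambda>k. H22 x y *v k)) (at y)"
proof -
  have p: "((\<lambda>k. (x, k)) has_derivative (\<lambda>k. (0, k))) (at y)"
    by (auto intro!: derivative_eq_intros)
  have "((\<lambda>k. (\<lambda>(u, v). g2 u v) (x, k)) has_derivative
          (\<lambda>k. (\<lambda>(h, k). H21 x y *v h + H22 x y *v k) (0, k))) (at y)"
    by (rule has_derivative_compose[OF p hess_2])
  then show ?thesis by simp
qed

lemma concave_grad:
  "f x v \<le> f x u + g2 x u \<bullet> (v - u) - \<mu> / 2 * (norm (v - u))\<^sup>2"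
proof -
  define \<psi> where "\<psi> t = - f x (u + t *\<^sub>R (v - u))" for t
  have d: "(\<psi> has_real_derivative (- (g2 x u \<bullet> (v - u)))) (at 0)"
    unfolding \<psi>_def by (intro DERIV_minus line_deriv fy_deriv)
  have sc: "f x (t *\<^sub>R v + (1 - t) *\<^sub>R u) \<ge> t * f x v + (1 - t) * f x u
              + \<mu> / 2 * t * (1 - t) * (norm (v - u))\<^sup>2" if "0 \<le> t" "t \<le> 1" for t
    using strong_conc[of x] that unfolding strongly_concave_on_def by blast
  have "- (g2 x u \<bullet> (v - u)) \<le> - (f x v - f x u + \<mu> / 2 * (1 - 0) * (norm (v - u))\<^sup>2)"
  proof (rule deriv_quot_le[OF d])
    fix t :: real assume t: "0 < t" "t < 1"
    have e: "t *\<^sub>R v + (1 - t) *\<^sub>R u = u + t *\<^sub>R (v - u)" by (simp add: algebra_simps)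
    show "\<psi> t - \<psi> 0 \<le> t * (- (f x v - f x u + \<mu> / 2 * (1 - t) * (norm (v - u))\<^sup>2))"
      using sc[of t] t unfolding \<psi>_def e by (simp add: algebra_simps)
  next
    show "((\<lambda>t. - (f x v - f x u + \<mu> / 2 * (1 - t) * (norm (v - u))\<^sup>2)) \<longlongrightarrow>
       - (f x v - f x u + \<mu> / 2 * (1 - 0) * (norm (v - u))\<^sup>2)) (at_right 0)"
      by (intro tendsto_intros)
  qed
  then show ?thesis by simp
qed

lemma strong_mono:
  "(g2 x v - g2 x u) \<bullet> (v - u) \<le> - \<mu> * (norm (v - u))\<^sup>2"
proof -
  have a: "f x v \<le> f x u + g2 x u \<bullet> (v - u) - \<mu> / 2 * (norm (v - u))\<^sup>2" by (rule concave_grad)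
  have b: "f x u \<le> f x v + g2 x v \<bullet> (u - v) - \<mu> / 2 * (norm (u - v))\<^sup>2" by (rule concave_grad)
  have c: "g2 x v \<bullet> (u - v) = - (g2 x v \<bullet> (v - u))" by (simp add: inner_diff_right)
  have n: "norm (u - v) = norm (v - u)" by (rule norm_minus_commute)
  show ?thesis using a b c n by (simp add: inner_diff_left algebra_simps)
qed

end


lemma lip_deriv_bound:
  fixes F :: "'a::real_normed_vector \<Rightarrow> 'b::real_inner"
  assumes d: "(F has_derivative D) (at p)" and l: "L-lipschitz_on UNIV F"
  shows "norm (D w) \<le> L * norm w"
proof -
  have L0: "0 \<le> L" using l lipschitz_on_nonneg by blast
  define \<psi> where "\<psi> t = F (p + t *\<^sub>R w) \<bullet> D w" for t
  have dd: "((\<lambda>q. F q \<bullet> D w) has_derivative (\<lambda>q. D q \<bullet> D w)) (at p)"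
    using d by (auto intro!: derivative_eq_intros)
  have d\<psi>: "(\<psi> has_real_derivative (D w \<bullet> D w)) (at 0)"
    unfolding \<psi>_def by (rule line_deriv[OF dd])
  have "D w \<bullet> D w \<le> L * norm w * norm (D w)"
  proof (rule deriv_quot_le[OF d\<psi>])
    fix t :: real assume t: "0 < t" "t < 1"
    have "\<psi> t - \<psi> 0 = (F (p + t *\<^sub>R w) - F p) \<bullet> D w"
      unfolding \<psi>_def by (simp add: inner_diff_left)
    also have "\<dots> \<le> norm (F (p + t *\<^sub>R w) - F p) * norm (D w)"
      by (rule norm_cauchy_schwarz)
    also have "norm (F (p + t *\<^sub>R w) - F p) \<le> L * norm (t *\<^sub>R w)"
      using lipschitz_onD[OF l, of "p + t *\<^sub>R w" p] by (simp add: dist_norm)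
    then have "norm (F (p + t *\<^sub>R w) - F p) * norm (D w) \<le> L * norm (t *\<^sub>R w) * norm (D w)"
      by (intro mult_right_mono) auto
    also have "\<dots> = t * (L * norm w * norm (D w))" using t by simp
    finally show "\<psi> t - \<psi> 0 \<le> t * (L * norm w * norm (D w))" .
  qed simp
  then have "norm (D w) ^ 2 \<le> L * norm w * norm (D w)"
    by (simp add: power2_norm_eq_inner)
  then show ?thesis
    by (cases "norm (D w) = 0") (use L0 in \<open>auto simp: power2_eq_square\<close>)
qed

context setting begin

lemma ex_max: "\<exists>y. \<forall>y'. f x y' \<le> f x y"
proof -
  define g where "g = g2 x 0"
  define R where "R = 2 * norm g / \<mu>"
  have cont: "continuous_on UNIV (\<lambda>y. f x y)"
    using fy_deriv has_derivative_continuous continuous_at_imp_continuous_on by blast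
  obtain y0 where y0: "y0 \<in> cball 0 R" "\<And>y. y \<in> cball 0 R \<Longrightarrow> f x y \<le> f x y0"
    using continuous_attains_sup[of "cball 0 R" "\<lambda>y. f x y"] cont
    by (metis R_def compact_cball cball_eq_empty continuous_on_subset divide_nonneg_pos
        mu_pos mult_nonneg_nonneg norm_ge_zero not_le order_less_irrefl top_greatest zero_le_numeral)
  have "0 \<in> cball 0 R" using mu_pos by (simp add: R_def)
  then have f0: "f x 0 \<le> f x y0" using y0 by blast
  show ?thesis
  proof (intro exI allI)
    fix v
    show "f x v \<le> f x y0"
    proof (cases "v \<in> cball 0 R")
      case True then show ?thesis using y0 by blast
    next
      case False
      then have nv: "norm v > R" by simp
      have a: "f x v \<le> f x 0 + g \<bullet> v - \<mu> / 2 * (norm v)\<^sup>2"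
        using concave_grad[of x v 0] by (simp add: g_def)
      have b: "g \<bullet> v \<le> norm g * norm v" by (rule norm_cauchy_schwarz)
      have e: "norm g * norm v - \<mu> / 2 * (norm v)\<^sup>2 = norm v * (norm g - \<mu> / 2 * norm v)"
        by (simp add: power2_eq_square algebra_simps)
      have n1: "norm g - \<mu> / 2 * norm v < 0"
      proof -
        have "\<mu> * R = 2 * norm g" using mu_pos by (simp add: R_def)
        moreover have "\<mu> * R < \<mu> * norm v" using nv mu_pos by simp
        ultimately show ?thesis by simp
      qed
      have n2: "norm v > 0"
      proof -
        have "0 \<le> R" using mu_pos by (simp add: R_def)
        then show ?thesis using nv by linarith
      qed
      have "norm v * (norm g - \<mu> / 2 * norm v) < 0"
        using n1 n2 by (simp add: mult_pos_neg)
      then show ?thesis using a b e f0 by linarith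
    qed
  qed
qed

lemma uniq_max:
  assumes "\<forall>y'. f x y' \<le> f x y1" "\<forall>y'. f x y' \<le> f x y2"
  shows "y1 = y2"
proof (rule ccontr)
  assume ne: "y1 \<noteq> y2"
  have sc: "\<forall>u\<in>UNIV. \<forall>v\<in>UNIV. \<forall>t::real. 0 \<le> t \<and> t \<le> 1 \<longrightarrow>
        f x (t *\<^sub>R u + (1 - t) *\<^sub>R v) \<ge> t * f x u + (1 - t) * f x v + \<mu> / 2 * t * (1 - t) * (norm (u - v))\<^sup>2"
    using strong_conc[of x] unfolding strongly_concave_on_def by blast
  have "f x ((1/2) *\<^sub>R y1 + (1 - 1/2) *\<^sub>R y2) \<ge> 1/2 * f x y1 + (1 - 1/2) * f x y2
              + \<mu> / 2 * (1/2) * (1 - 1/2) * (norm (y1 - y2))\<^sup>2"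
    by (rule sc[rule_format]) auto
  moreover have "f x y1 = f x y2" using assms by (simp add: order.antisym)
  moreover have "\<mu> / 2 * (1/2) * (1 - 1/2) * (norm (y1 - y2))\<^sup>2 > 0"
    using ne mu_pos by simp
  moreover have "f x ((1/2) *\<^sub>R y1 + (1 - 1/2) *\<^sub>R y2) \<le> f x y1" using assms by blast
  ultimately show False by simp
qed

lemma ys_max: "f x y' \<le> f x (argmax_y f x)"
proof -
  have "\<exists>!y. \<forall>y'. f x y' \<le> f x y" using ex_max uniq_max by blast
  then have "\<forall>y'. f x y' \<le> f x (argmax_y f x)"
    unfolding argmax_y_def by (rule theI')
  then show ?thesis by blast
qed

lemma envelope_eq: "envelope f x = f x (argmax_y f x)"
  unfolding envelope_def by (rule cSup_eq_maximum) (auto intro: ys_max)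

lemma g2_ys: "g2 x (argmax_y f x) = 0"
proof -
  have "(\<lambda>k. g2 x (argmax_y f x) \<bullet> k) = (\<lambda>h. 0)"
    by (rule has_derivative_local_max[OF fy_deriv]) (auto intro: ys_max always_eventually)
  then have "g2 x (argmax_y f x) \<bullet> g2 x (argmax_y f x) = 0" by meson
  then show ?thesis by simp
qed

lemma H22_neg: "(H22 x y *v v) \<bullet> v \<le> - \<mu> * (norm v)\<^sup>2"
proof -
  have dd: "((\<lambda>z. g2 x z \<bullet> v) has_derivative (\<lambda>k. (H22 x y *v k) \<bullet> v)) (at y)"
    using g2y_deriv by (auto intro!: derivative_eq_intros)
  have d\<psi>: "((\<lambda>t. g2 x (y + t *\<^sub>R v) \<bullet> v) has_real_derivative ((H22 x y *v v) \<bullet> v)) (at 0)"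
    by (rule line_deriv[OF dd])
  show ?thesis
  proof (rule deriv_quot_le[OF d\<psi>, where c="\<lambda>_. - \<mu> * (norm v)\<^sup>2"])
    fix t :: real assume t: "0 < t" "t < 1"
    have "(g2 x (y + t *\<^sub>R v) - g2 x y) \<bullet> ((y + t *\<^sub>R v) - y) \<le> - \<mu> * (norm ((y + t *\<^sub>R v) - y))\<^sup>2"
      by (rule strong_mono)
    then have "t * ((g2 x (y + t *\<^sub>R v) - g2 x y) \<bullet> v) \<le> t * (t * (- \<mu> * (norm v)\<^sup>2))"
      using t by (simp add: power2_eq_square algebra_simps)
    then have "(g2 x (y + t *\<^sub>R v) - g2 x y) \<bullet> v \<le> t * (- \<mu> * (norm v)\<^sup>2)"
      using t(1) by (rule mult_left_le_imp_le)
    then show "g2 x (y + t *\<^sub>R v) \<bullet> v - g2 x (y + 0 *\<^sub>R v) \<bullet> v \<le> t * (- \<mu> * (norm v)\<^sup>2)"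
      by (simp add: inner_diff_left)
  qed simp
qed

lemma H22_lower: "\<mu> * norm v \<le> norm (H22 x y *v v)"
proof (cases "v = 0")
  case True then show ?thesis by simp
next
  case False
  have "\<mu> * (norm v)\<^sup>2 \<le> - ((H22 x y *v v) \<bullet> v)" using H22_neg[of x y v] by simp
  also have "\<dots> \<le> norm (H22 x y *v v) * norm v"
    using Cauchy_Schwarz_ineq2[of "H22 x y *v v" v] by linarith
  finally have "(\<mu> * norm v) * norm v \<le> norm (H22 x y *v v) * norm v"
    by (simp add: power2_eq_square algebra_simps)
  then show ?thesis using False by simp
qed

lemma H22_invertible: "invertible (H22 x y)"
proof -
  have "inj ((*v) (H22 x y))"
  proof (rule injI)
    fix a b assume "H22 x y *v a = H22 x y *v b"
    then have "H22 x y *v (a - b) = 0" by (simp add: matrix_vector_mult_diff_distrib)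
    then have "\<mu> * norm (a - b) \<le> 0" using H22_lower[of "a - b" x y] by simp
    then show "a = b" using mu_pos by (simp add: mult_le_0_iff)
  qed
  then show ?thesis
    using matrix_left_invertible_injective invertible_left_inverse by blast
qed

lemma H22_inv: "H22 x y ** matrix_inv (H22 x y) = mat 1" "matrix_inv (H22 x y) ** H22 x y = mat 1"
proof -
  have "\<exists>A'. H22 x y ** A' = mat 1 \<and> A' ** H22 x y = mat 1"
    using H22_invertible invertible_def by blast
  then have "H22 x y ** matrix_inv (H22 x y) = mat 1 \<and> matrix_inv (H22 x y) ** H22 x y = mat 1"
    unfolding matrix_inv_def by (rule someI_ex)
  then show "H22 x y ** matrix_inv (H22 x y) = mat 1" "matrix_inv (H22 x y) ** H22 x y = mat 1"
    by auto
qed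

lemma H22_inv_norm: "spec_norm (matrix_inv (H22 x y)) \<le> 1 / \<mu>"
proof (rule spec_norm_le)
  fix w
  define v where "v = matrix_inv (H22 x y) *v w"
  have "H22 x y *v v = w" unfolding v_def
    by (simp add: matrix_vector_mul_assoc H22_inv)
  then have "\<mu> * norm v \<le> norm w" using H22_lower[of v x y] by simp
  then show "norm (matrix_inv (H22 x y) *v w) \<le> 1 / \<mu> * norm w"
    using mu_pos by (simp add: v_def field_simps)
qed

lemma DF: "((\<lambda>(x, y). (g1 x y, g2 x y)) has_derivative
   (\<lambda>(h, k). (H11 x y *v h + H12 x y *v k, H21 x y *v h + H22 x y *v k))) (at (x, y))"
proof -
  have "((\<lambda>p. ((\<lambda>(u, v). g1 u v) p, (\<lambda>(u, v). g2 u v) p)) has_derivative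
    (\<lambda>q. ((\<lambda>(h, k). H11 x y *v h + H12 x y *v k) q, (\<lambda>(h, k). H21 x y *v h + H22 x y *v k) q))) (at (x, y))"
    by (rule has_derivative_Pair[OF hess_1 hess_2])
  moreover have "(\<lambda>p. ((\<lambda>(u, v). g1 u v) p, (\<lambda>(u, v). g2 u v) p)) = (\<lambda>(x, y). (g1 x y, g2 x y))"
    by (auto simp: fun_eq_iff)
  moreover have "(\<lambda>q. ((\<lambda>(h, k). H11 x y *v h + H12 x y *v k) q, (\<lambda>(h, k). H21 x y *v h + H22 x y *v k) q))
     = (\<lambda>(h, k). (H11 x y *v h + H12 x y *v k, H21 x y *v h + H22 x y *v k))"
    by (auto simp: fun_eq_iff)
  ultimately show ?thesis by simp
qed

lemma H12_norm: "spec_norm (H12 x y) \<le> L1"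
proof (rule spec_norm_le)
  fix k
  have "norm ((\<lambda>(h, k). (H11 x y *v h + H12 x y *v k, H21 x y *v h + H22 x y *v k)) (0, k)) \<le> L1 * norm (0::real^'m, k)"
    by (rule lip_deriv_bound[OF DF lip_grad])
  then have "norm (H12 x y *v k, H22 x y *v k) \<le> L1 * norm k" by simp
  then show "norm (H12 x y *v k) \<le> L1 * norm k" using norm_fst_le order_trans by blast
qed

lemma H21_norm: "spec_norm (H21 x y) \<le> L1"
proof (rule spec_norm_le)
  fix h
  have "norm ((\<lambda>(h, k). (H11 x y *v h + H12 x y *v k, H21 x y *v h + H22 x y *v k)) (h, 0)) \<le> L1 * norm (h, 0::real^'n)"
    by (rule lip_deriv_bound[OF DF lip_grad])
  then have "norm (H11 x y *v h, H21 x y *v h) \<le> L1 * norm h" by simp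
  then show "norm (H21 x y *v h) \<le> L1 * norm h" using norm_snd_le order_trans by blast
qed

lemma g2_lip_x: "norm (g2 x y - g2 x' y) \<le> L1 * norm (x - x')"
proof -
  have "dist ((\<lambda>(x, y). (g1 x y, g2 x y)) (x, y)) ((\<lambda>(x, y). (g1 x y, g2 x y)) (x', y)) \<le> L1 * dist (x, y) (x', y)"
    by (rule lipschitz_onD[OF lip_grad]) auto
  then have "norm (g1 x y - g1 x' y, g2 x y - g2 x' y) \<le> L1 * norm (x - x', 0::real^'n)"
    by (simp add: dist_norm)
  moreover have "norm (x - x', 0::real^'n) = norm (x - x')" by (simp add: norm_Pair)
  ultimately show ?thesis by (metis order_trans norm_snd_le)
qed

lemma ys_lip: "norm (argmax_y f x - argmax_y f x') \<le> L1 / \<mu> * norm (x - x')"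
proof -
  define y where "y = argmax_y f x"
  define y' where "y' = argmax_y f x'"
  have m: "(g2 x y' - g2 x y) \<bullet> (y' - y) \<le> - \<mu> * (norm (y' - y))\<^sup>2" by (rule strong_mono)
  have z: "g2 x y = 0" "g2 x' y' = 0" unfolding y_def y'_def by (rule g2_ys)+
  have "\<mu> * (norm (y' - y))\<^sup>2 \<le> - ((g2 x y' - g2 x' y') \<bullet> (y' - y))" using m z by simp
  also have "\<dots> \<le> norm (g2 x y' - g2 x' y') * norm (y' - y)"
    using Cauchy_Schwarz_ineq2[of "g2 x y' - g2 x' y'" "y' - y"] by linarith
  also have "\<dots> \<le> L1 * norm (x - x') * norm (y' - y)"
    by (intro mult_right_mono g2_lip_x) auto
  finally have "(\<mu> * norm (y' - y)) * norm (y' - y) \<le> (L1 * norm (x - x')) * norm (y' - y)"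
    by (simp add: power2_eq_square algebra_simps)
  then have "\<mu> * norm (y' - y) \<le> L1 * norm (x - x')"
    by (cases "norm (y' - y) = 0") (use L1_nonneg in auto)
  then show ?thesis using mu_pos
    by (simp add: y_def y'_def norm_minus_commute field_simps)
qed

end


lemma mvb: "spec_norm X \<le> x \<Longrightarrow> norm u \<le> n \<Longrightarrow> norm (X *v u) \<le> x * n"
  by (meson mult_mono norm_ge_zero order_trans spec_norm_mv spec_norm_nonneg)

lemma G_lip_abs:
  fixes A A' :: "real^'m^'m" and B B' :: "real^'n^'m" and H H' C C' :: "real^'n^'n"
    and D D' :: "real^'m^'n"
  assumes CH: "C ** H = mat 1" and HC': "H' ** C' = mat 1"
    and dA: "spec_norm (A - A') \<le> a" and dB: "spec_norm (B - B') \<le> a"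
    and dD: "spec_norm (D - D') \<le> a" and dH: "spec_norm (H - H') \<le> a"
    and nC: "spec_norm C \<le> c" and nC': "spec_norm C' \<le> c"
    and nB': "spec_norm B' \<le> l" and nD: "spec_norm D \<le> l"
  shows "spec_norm ((A - B ** C ** D) - (A' - B' ** C' ** D')) \<le> a + a * c * l + l * (c * (a * (c * l))) + l * (c * a)"
proof (rule spec_norm_le)
  fix v
  define w where "w = D *v v"
  define u where "u = C' *v w"
  have Cw: "C *v w - C' *v w = C *v ((H' - H) *v u)"
  proof -
    have "C *v w = C *v (H' *v u)" unfolding u_def
      by (simp add: matrix_vector_mul_assoc HC')
    moreover have "C' *v w = C *v (H *v u)"
    proof -
      have "C *v (H *v u) = u" by (simp add: matrix_vector_mul_assoc CH)
      then show ?thesis by (simp add: u_def)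
    qed
    ultimately show ?thesis by (simp add: matrix_vector_mult_diff_rdistrib vec.diff)
  qed
  define p1 where "p1 = (A - A') *v v"
  define p2 where "p2 = (B - B') *v (C *v w)"
  define p3 where "p3 = B' *v (C *v ((H' - H) *v u))"
  define p4 where "p4 = B' *v (C' *v ((D - D') *v v))"
  have eq: "((A - B ** C ** D) - (A' - B' ** C' ** D')) *v v = p1 - (p2 + p3 + p4)"
  proof -
    have "((A - B ** C ** D) - (A' - B' ** C' ** D')) *v v
       = (A - A') *v v - (B *v (C *v w) - B' *v (C' *v (D' *v v)))"
      by (simp add: matrix_vector_mult_diff_rdistrib matrix_vector_mul_assoc[symmetric] w_def algebra_simps)
    also have "B *v (C *v w) - B' *v (C' *v (D' *v v)) = p2 + p3 + p4"
    proof -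
      have "p3 = B' *v (C *v w) - B' *v (C' *v w)" unfolding p3_def Cw[symmetric] by (simp add: vec.diff)
      moreover have "p4 = B' *v (C' *v w) - B' *v (C' *v (D' *v v))"
        unfolding p4_def w_def by (simp add: matrix_vector_mult_diff_rdistrib vec.diff)
      moreover have "p2 = B *v (C *v w) - B' *v (C *v w)"
        unfolding p2_def by (simp add: matrix_vector_mult_diff_rdistrib)
      ultimately show ?thesis by simp
    qed
    finally show ?thesis by (simp add: p1_def)
  qed
  have nw: "norm w \<le> l * norm v" unfolding w_def by (rule mvb[OF nD order_refl])
  have nu: "norm u \<le> c * (l * norm v)" unfolding u_def by (rule mvb[OF nC' nw])
  have hh: "norm ((H' - H) *v u) = norm ((H - H') *v u)"
    by (metis matrix_vector_mult_diff_rdistrib norm_minus_commute)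
  have n1: "norm p1 \<le> a * norm v" unfolding p1_def by (rule mvb[OF dA order_refl])
  have n2: "norm p2 \<le> a * (c * (l * norm v))" unfolding p2_def by (rule mvb[OF dB mvb[OF nC nw]])
  have n3: "norm p3 \<le> l * (c * (a * (c * (l * norm v))))" unfolding p3_def
    by (rule mvb[OF nB' mvb[OF nC]]) (simp only: hh, rule mvb[OF dH nu])
  have n4: "norm p4 \<le> l * (c * (a * norm v))" unfolding p4_def
    by (rule mvb[OF nB' mvb[OF nC' mvb[OF dD order_refl]]])
  have "norm (p1 - (p2 + p3 + p4)) \<le> norm p1 + norm p2 + norm p3 + norm p4"
    by (smt (verit) norm_triangle_ineq norm_triangle_ineq4)
  then show "norm (((A - B ** C ** D) - (A' - B' ** C' ** D')) *v v)
      \<le> (a + a * c * l + l * (c * (a * (c * l))) + l * (c * a)) * norm v"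
    unfolding eq using n1 n2 n3 n4 by (simp add: algebra_simps)
qed



lemma neg_mv: "(- (A::real^'n^'m)) *v x = - (A *v x)"
  by (simp add: matrix_vector_mult_def vec_eq_iff sum_negf[symmetric])

context setting begin

abbreviation "ys \<equiv> argmax_y f"
definition "Y x = - (matrix_inv (H22 x (ys x)) ** H21 x (ys x))"

lemma ys_deriv: "(ys has_derivative (\<lambda>h. Y x *v h)) (at x)"
  unfolding has_derivative_at_alt
proof (intro conjI allI impI)
  show "bounded_linear (\<lambda>h. Y x *v h)" by (rule bl_mv)
next
  fix e :: real assume e: "e > 0"
  define k where "k = L1 / \<mu>"
  have k0: "0 \<le> k" using L1_nonneg mu_pos by (simp add: k_def)
  define p where "p = (x, ys x)"
  define C where "C = matrix_inv (H22 x (ys x))"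
  have e': "e * \<mu> / (1 + k) > 0" using e mu_pos k0 by simp
  obtain d where d: "d > 0" and
    dd: "\<And>q. norm (q - p) < d \<Longrightarrow> norm ((\<lambda>(u, v). g2 u v) q - (\<lambda>(u, v). g2 u v) p
              - (\<lambda>(h, k). H21 x (ys x) *v h + H22 x (ys x) *v k) (q - p)) \<le> e * \<mu> / (1 + k) * norm (q - p)"
    using hess_2[of x "ys x", unfolded has_derivative_at_alt] e' unfolding p_def by meson
  show "\<exists>d>0. \<forall>x'. norm (x' - x) < d \<longrightarrow> norm (ys x' - ys x - Y x *v (x' - x)) \<le> e * norm (x' - x)"
  proof (intro exI[of _ "d / (1 + k)"] conjI allI impI)
    show "d / (1 + k) > 0" using d k0 by simp
  next
    fix x' assume x': "norm (x' - x) < d / (1 + k)"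
    define q where "q = (x', ys x')"
    have nq: "norm (q - p) \<le> (1 + k) * norm (x' - x)"
    proof -
      have "norm (q - p) \<le> norm (x' - x) + norm (ys x' - ys x)"
        unfolding q_def p_def using norm_Pair_le by simp
      moreover have "norm (ys x' - ys x) \<le> k * norm (x' - x)" unfolding k_def by (rule ys_lip)
      ultimately show ?thesis by (simp add: algebra_simps)
    qed
    have "(1 + k) * norm (x' - x) < d" using x' k0 by (simp add: field_simps)
    then have "norm (q - p) < d" using nq by linarith
    then have r0: "norm (- (H21 x (ys x) *v (x' - x) + H22 x (ys x) *v (ys x' - ys x)))
               \<le> e * \<mu> / (1 + k) * norm (q - p)"
      using dd[of q] by (simp add: q_def p_def g2_ys)
    then have r: "norm (H21 x (ys x) *v (x' - x) + H22 x (ys x) *v (ys x' - ys x))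
               \<le> e * \<mu> / (1 + k) * norm (q - p)"
      by (simp only: norm_minus_cancel)
    also have "\<dots> \<le> e * \<mu> / (1 + k) * ((1 + k) * norm (x' - x))"
      by (rule mult_left_mono[OF nq]) (use e' in simp)
    also have "\<dots> = e * \<mu> * norm (x' - x)" using k0 by simp
    finally have r2: "norm (H21 x (ys x) *v (x' - x) + H22 x (ys x) *v (ys x' - ys x)) \<le> e * \<mu> * norm (x' - x)" .
    have eq: "ys x' - ys x - Y x *v (x' - x) = C *v (H21 x (ys x) *v (x' - x) + H22 x (ys x) *v (ys x' - ys x))"
    proof -
      have "C *v (H22 x (ys x) *v (ys x' - ys x)) = ys x' - ys x"
        by (simp add: C_def matrix_vector_mul_assoc H22_inv)
      moreover have "Y x *v (x' - x) = - (C *v (H21 x (ys x) *v (x' - x)))"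
        by (simp add: Y_def C_def matrix_vector_mul_assoc neg_mv)
      ultimately show ?thesis by (simp add: matrix_vector_right_distrib)
    qed
    have "norm (ys x' - ys x - Y x *v (x' - x)) \<le> 1 / \<mu> * (e * \<mu> * norm (x' - x))"
      unfolding eq C_def by (rule mvb[OF H22_inv_norm r2])
    then show "norm (ys x' - ys x - Y x *v (x' - x)) \<le> e * norm (x' - x)"
      using mu_pos by simp
  qed
qed

lemma Phi_deriv: "(envelope f has_derivative (\<lambda>h. g1 x (ys x) \<bullet> h)) (at x)"
proof -
  have p: "((\<lambda>x. (x, ys x)) has_derivative (\<lambda>h. (h, Y x *v h))) (at x)"
    by (rule has_derivative_Pair[OF has_derivative_ident ys_deriv])
  have "((\<lambda>x. (\<lambda>(u, v). f u v) (x, ys x)) has_derivative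
          (\<lambda>h. (\<lambda>(h, k). g1 x (ys x) \<bullet> h + g2 x (ys x) \<bullet> k) (h, Y x *v h))) (at x)"
    by (rule has_derivative_compose[OF p grad_f])
  moreover have "(\<lambda>x. (\<lambda>(u, v). f u v) (x, ys x)) = envelope f"
    by (simp add: fun_eq_iff envelope_eq)
  ultimately show ?thesis by (simp add: g2_ys)
qed

lemma gPhi_deriv: "((\<lambda>x. g1 x (ys x)) has_derivative
   (\<lambda>h. (H11 x (ys x) - H12 x (ys x) ** matrix_inv (H22 x (ys x)) ** H21 x (ys x)) *v h)) (at x)"
proof -
  have p: "((\<lambda>x. (x, ys x)) has_derivative (\<lambda>h. (h, Y x *v h))) (at x)"
    by (rule has_derivative_Pair[OF has_derivative_ident ys_deriv])
  have "((\<lambda>x. (\<lambda>(u, v). g1 u v) (x, ys x)) has_derivative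
          (\<lambda>h. (\<lambda>(h, k). H11 x (ys x) *v h + H12 x (ys x) *v k) (h, Y x *v h))) (at x)"
    by (rule has_derivative_compose[OF p hess_1])
  moreover have "(\<lambda>h. (\<lambda>(h, k). H11 x (ys x) *v h + H12 x (ys x) *v k) (h, Y x *v h))
     = (\<lambda>h. (H11 x (ys x) - H12 x (ys x) ** matrix_inv (H22 x (ys x)) ** H21 x (ys x)) *v h)"
    by (simp add: fun_eq_iff Y_def matrix_vector_mult_diff_rdistrib matrix_vector_mul_assoc[symmetric] vec.neg neg_mv)
  ultimately show ?thesis by simp
qed

lemma L2_nonneg: "0 \<le> L2"
proof -
  have "spec_norm (H11 0 0 - H11 (vec 1) 0) \<le> L2 * norm ((0::real^'m, 0::real^'n) - (vec 1, 0))"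
    by (rule lip_11)
  moreover have "norm ((0::real^'m, 0::real^'n) - (vec 1, 0)) > 0"
    by (simp add: vec_eq_iff)
  moreover have "0 \<le> spec_norm (H11 0 0 - H11 (vec 1) 0)" by (rule spec_norm_nonneg)
  ultimately show ?thesis by (meson order_trans zero_le_mult_iff not_le)
qed

lemma G_lip: "spec_norm ((H11 x y - H12 x y ** matrix_inv (H22 x y) ** H21 x y)
      - (H11 x' y' - H12 x' y' ** matrix_inv (H22 x' y') ** H21 x' y'))
   \<le> L2 * (1 + L1 / \<mu>)\<^sup>2 * norm ((x, y) - (x', y'))"
proof -
  define r where "r = norm ((x, y) - (x', y'))"
  have l11: "spec_norm (H11 x y - H11 x' y') \<le> L2 * r" unfolding r_def by (rule lip_11)
  have l12: "spec_norm (H12 x y - H12 x' y') \<le> L2 * r" unfolding r_def by (rule lip_12)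
  have l21: "spec_norm (H21 x y - H21 x' y') \<le> L2 * r" unfolding r_def by (rule lip_21)
  have l22: "spec_norm (H22 x y - H22 x' y') \<le> L2 * r" unfolding r_def by (rule lip_22)
  have "spec_norm ((H11 x y - H12 x y ** matrix_inv (H22 x y) ** H21 x y)
      - (H11 x' y' - H12 x' y' ** matrix_inv (H22 x' y') ** H21 x' y'))
     \<le> L2 * r + L2 * r * (1 / \<mu>) * L1 + L1 * (1 / \<mu> * (L2 * r * (1 / \<mu> * L1))) + L1 * (1 / \<mu> * (L2 * r))"
    by (rule G_lip_abs[OF H22_inv(2) H22_inv(1) l11 l12 l21 l22 H22_inv_norm H22_inv_norm H12_norm H21_norm])
  also have "\<dots> = L2 * (1 + L1 / \<mu>)\<^sup>2 * r"
    using mu_pos by (simp add: power2_eq_square field_simps)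
  finally show ?thesis unfolding r_def .
qed

lemma GPhi_lip: "spec_norm ((H11 x (ys x) - H12 x (ys x) ** matrix_inv (H22 x (ys x)) ** H21 x (ys x))
      - (H11 x' (ys x') - H12 x' (ys x') ** matrix_inv (H22 x' (ys x')) ** H21 x' (ys x')))
   \<le> L2 * (1 + L1 / \<mu>) ^ 3 * norm (x - x')"
proof -
  have k0: "0 \<le> L1 / \<mu>" using L1_nonneg mu_pos by simp
  have "norm ((x, ys x) - (x', ys x')) \<le> norm (x - x') + norm (ys x - ys x')"
    using norm_Pair_le by simp
  also have "\<dots> \<le> norm (x - x') + L1 / \<mu> * norm (x - x')" using ys_lip by simp
  finally have n: "norm ((x, ys x) - (x', ys x')) \<le> (1 + L1 / \<mu>) * norm (x - x')"
    by (simp add: algebra_simps)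
  have "L2 * (1 + L1 / \<mu>)\<^sup>2 * norm ((x, ys x) - (x', ys x')) \<le> L2 * (1 + L1 / \<mu>)\<^sup>2 * ((1 + L1 / \<mu>) * norm (x - x'))"
    by (rule mult_left_mono[OF n]) (use L2_nonneg in simp)
  also have "\<dots> = L2 * (1 + L1 / \<mu>) ^ 3 * norm (x - x')"
    by (simp add: power2_eq_square power3_eq_cube)
  finally show ?thesis using G_lip order_trans by blast
qed

end

theorem proposition2:
  fixes f :: "real^'m \<Rightarrow> real^'n \<Rightarrow> real"
    and g1 :: "real^'m \<Rightarrow> real^'n \<Rightarrow> real^'m"
    and g2 :: "real^'m \<Rightarrow> real^'n \<Rightarrow> real^'n"
    and H11 :: "real^'m \<Rightarrow> real^'n \<Rightarrow> real^'m^'m"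
    and H12 :: "real^'m \<Rightarrow> real^'n \<Rightarrow> real^'n^'m"
    and H21 :: "real^'m \<Rightarrow> real^'n \<Rightarrow> real^'m^'n"
    and H22 :: "real^'m \<Rightarrow> real^'n \<Rightarrow> real^'n^'n"
    and L1 L2 \<mu> :: real
  assumes grad_f: "\<And>x y. ((\<lambda>(u, v). f u v) has_derivative
                     (\<lambda>(h, k). g1 x y \<bullet> h + g2 x y \<bullet> k)) (at (x, y))"
    and hess_1: "\<And>x y. ((\<lambda>(u, v). g1 u v) has_derivative
                     (\<lambda>(h, k). H11 x y *v h + H12 x y *v k)) (at (x, y))"
    and hess_2: "\<And>x y. ((\<lambda>(u, v). g2 u v) has_derivative
                     (\<lambda>(h, k). H21 x y *v h + H22 x y *v k)) (at (x, y))"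
    and cont_11: "continuous_on UNIV (\<lambda>(x, y). H11 x y)"
    and cont_12: "continuous_on UNIV (\<lambda>(x, y). H12 x y)"
    and cont_21: "continuous_on UNIV (\<lambda>(x, y). H21 x y)"
    and cont_22: "continuous_on UNIV (\<lambda>(x, y). H22 x y)"
    and lip_grad: "L1-lipschitz_on UNIV (\<lambda>(x, y). (g1 x y, g2 x y))"
    and mu_pos: "\<mu> > 0"
    and strong_conc: "\<And>x. strongly_concave_on \<mu> UNIV (\<lambda>y. f x y)"
    and lip_11: "\<And>x y x' y'. spec_norm (H11 x y - H11 x' y') \<le> L2 * norm ((x, y) - (x', y'))"
    and lip_12: "\<And>x y x' y'. spec_norm (H12 x y - H12 x' y') \<le> L2 * norm ((x, y) - (x', y'))"
    and lip_21: "\<And>x y x' y'. spec_norm (H21 x y - H21 x' y') \<le> L2 * norm ((x, y) - (x', y'))"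
    and lip_22: "\<And>x y x' y'. spec_norm (H22 x y - H22 x' y') \<le> L2 * norm ((x, y) - (x', y'))"
    and Phi_bdd: "bdd_below (range (envelope f))"
    and Phi_sublevel: "\<And>c. compact {x. envelope f x \<le> c}"
  defines "\<kappa> \<equiv> L1 / \<mu>"
    and "G \<equiv> (\<lambda>x y. H11 x y - H12 x y ** matrix_inv (H22 x y) ** H21 x y)"
  shows "(\<forall>x y x' y'. spec_norm (G x y - G x' y')
            \<le> L2 * (1 + \<kappa>)\<^sup>2 * norm ((x, y) - (x', y')))
       \<and> (\<exists>gPhi :: real^'m \<Rightarrow> real^'m.
            (\<forall>x. (envelope f has_derivative (\<lambda>h. gPhi x \<bullet> h)) (at x))
          \<and> (\<forall>x. (gPhi has_derivative (\<lambda>h. G x (argmax_y f x) *v h)) (at x))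
          \<and> (\<forall>x x'. spec_norm (G x (argmax_y f x) - G x' (argmax_y f x'))
                 \<le> L2 * (1 + \<kappa>) ^ 3 * norm (x - x')))"
  proof -
  interpret setting f g1 g2 H11 H12 H21 H22 L1 L2 \<mu>
    by (rule setting.intro[OF grad_f hess_1 hess_2 lip_grad mu_pos strong_conc lip_11 lip_12 lip_21 lip_22])
  have P1: "\<forall>x y x' y'. spec_norm (G x y - G x' y') \<le> L2 * (1 + \<kappa>)\<^sup>2 * norm ((x, y) - (x', y'))"
    unfolding G_def \<kappa>_def using G_lip by blast
  have P2: "\<exists>gPhi :: real^'m \<Rightarrow> real^'m.
            (\<forall>x. (envelope f has_derivative (\<lambda>h. gPhi x \<bullet> h)) (at x))
          \<and> (\<forall>x. (gPhi has_derivative (\<lambda>h. G x (argmax_y f x) *v h)) (at x))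
          \<and> (\<forall>x x'. spec_norm (G x (argmax_y f x) - G x' (argmax_y f x'))
                 \<le> L2 * (1 + \<kappa>) ^ 3 * norm (x - x'))"
    unfolding G_def \<kappa>_def
    by (intro exI[of _ "\<lambda>x. g1 x (argmax_y f x)"] conjI allI Phi_deriv gPhi_deriv GPhi_lip)
  show ?thesis using P1 P2 by blast
qed

end
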